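(* Let $f\colon \mathbb{R}\to\mathbb{R}$ be a $\mathcal{C}^1$-smooth strictly convex function and let $x\in\mathbb{R}$ be a point with $f'(x)\neq 0$. Let $g=f'(x)$ and choose any initial scalar $h>0$. Consider the procedure: while $f(x-hg)\ge f(x)$, replace $h$ by its unit-step BFGS update $h_+$ at $x$ (defined below). Then this procedure terminates after finitely many iterations, i.e. eventually $f(x-hg)<f(x)$.
   Context: For a $\mathcal{C}^1$-smooth convex $f\colon\mathbb{R}^n\to\mathbb{R}$, a point $x$ with gradient $g=\nabla f(x)$, and a symmetric positive definite $n\times n$ matrix $H$, the unit-step BFGS update $H_+$ is defined by $s=-Hg$, $x_+=x+s$, $g_+=\nabla f(x_+)$, $y=g_+-g$, $V=I-\frac{sy^T}{s^Ty}$, $H_+=VHV^T+\frac{ss^T}{s^Ty}$ (defined when $s^Ty\neq 0$; strict convexity and $g\ne 0$ guarantee $s^Ty>0$). Here $n=1$, so $H=h$ is a positive scalar and the point $x$ stays fixed throughout the procedure. *)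

theory Defs
  imports "HOL-Analysis.Analysis"
begin

definition strictly_convex :: "(real \<Rightarrow> real) \<Rightarrow> bool" where
  "strictly_convex f \<longleftrightarrow>
     (\<forall>a b t. a \<noteq> b \<longrightarrow> 0 < t \<longrightarrow> t < 1 \<longrightarrow>
        f (t * a + (1 - t) * b) < t * f a + (1 - t) * f b)"

(* Unit-step BFGS update of the scalar (1x1) matrix H = h at the point x,
   for the function f with derivative df, written literally as in the paper:
   s = -H g, x+ = x + s, g+ = df x+, y = g+ - g, V = I - s y^T/(s^T y),
   H+ = V H V^T + s s^T/(s^T y). *)
definition bfgs_update :: "(real \<Rightarrow> real) \<Rightarrow> real \<Rightarrow> real \<Rightarrow> real" where
  "bfgs_update df x h =
     (let g = df x; s = - h * g; xp = x + s; gp = df xp; y = gp - g;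
          V = 1 - (s * y) / (s * y)
      in V * h * V + (s * s) / (s * y))"

primrec bfgs_iter :: "(real \<Rightarrow> real) \<Rightarrow> real \<Rightarrow> real \<Rightarrow> nat \<Rightarrow> real" where
  "bfgs_iter df x h 0 = h"
| "bfgs_iter df x h (Suc k) = bfgs_update df x (bfgs_iter df x h k)"

end

theory Submission
  imports Defs
begin

lemma sc_convex:
  assumes "strictly_convex f"
  shows "convex_on UNIV f"
proof (rule convex_onI)
  fix t a b :: real
  assume t: "0 < t" "t < 1"
  show "f ((1 - t) *\<^sub>R a + t *\<^sub>R b) \<le> (1 - t) * f a + t * f b"
  proof (cases "a = b")
    case True
    then show ?thesis by (simp add: algebra_simps)
  next
    case False
    have "f ((1-t) * a + (1 - (1-t)) * b) < (1-t) * f a + (1 - (1-t)) * f b"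
      using assms False t unfolding strictly_convex_def
      by (intro assms[unfolded strictly_convex_def, rule_format]) auto
    then show ?thesis by simp
  qed
qed auto

lemma aux_ineq: "(u::real) < (v + w) / 2 \<Longrightarrow> (X::real) = 2 * Y \<Longrightarrow> Y \<le> u - v \<Longrightarrow> X < w - v"
  by simp

lemma aux_div: "(H::real) > 0 \<Longrightarrow> (- H * g) * (- H * g) / (H * Q) = H * (g * g) / Q"
proof -
  assume "H > 0"
  have "(- H * g) * (- H * g) = H * (H * (g * g))" by (simp add: algebra_simps)
  moreover have "H * (H * (g * g)) / (H * Q) = H * (g * g) / Q"
    using \<open>H > 0\<close> by (simp add: mult_divide_mult_cancel_left)
  ultimately show ?thesis by simp
qed

lemma tangent_strict:
  assumes sc: "strictly_convex f" and D: "(f has_field_derivative D) (at a)" and ab: "a \<noteq> b"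
  shows "f b - f a > D * (b - a)"
proof -
  define m where "m = (a + b) / 2"
  have T: "f m - f a \<ge> D * (m - a)"
    by (rule convex_on_imp_above_tangent[OF sc_convex[OF sc]]) (use D in auto)
  have "f ((1/2) * a + (1 - 1/2) * b) < (1/2) * f a + (1 - 1/2) * f b"
    using sc ab unfolding strictly_convex_def by (intro sc[unfolded strictly_convex_def, rule_format]) auto
  moreover have "(1/2) * a + (1 - 1/2) * b = m" unfolding m_def by simp
  ultimately have "f m < (f a + f b) / 2" by simp
  moreover have "D * (b - a) = 2 * (D * (m - a))" unfolding m_def by (simp add: algebra_simps)
  ultimately show ?thesis using T aux_ineq by blast
qed

theorem mainTheorem1:
  fixes f :: "real \<Rightarrow> real" and x h :: real
  assumes diff: "\<forall>t. f differentiable (at t)"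
    and C1: "continuous_on UNIV (deriv f)"
    and conv: "strictly_convex f"
    and g_nz: "deriv f x \<noteq> 0"
    and h_pos: "h > 0"
  shows "\<exists>k. f (x - bfgs_iter (deriv f) x h k * deriv f x) < f x"
proof (rule ccontr)
  assume "\<not> ?thesis"
  hence ge: "\<And>k. f (x - bfgs_iter (deriv f) x h k * deriv f x) \<ge> f x" by (simp add: not_less)
  define d where "d = deriv f"
  define g where "g = d x"
  define H where "H = bfgs_iter d x h"
  define p where "p = (\<lambda>k. x - H k * g)"
  have D: "\<And>t. (f has_field_derivative d t) (at t)"
    using diff unfolding d_def by (simp add: DERIV_deriv_iff_real_differentiable)
  have gnz: "g \<noteq> 0" using g_nz unfolding g_def d_def .
  have g2: "g * g > 0" using gnz by (auto simp: zero_less_mult_iff linorder_neq_iff)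
  have ge': "\<And>k. f (p k) \<ge> f x" using ge unfolding p_def H_def g_def d_def .
  have step: "H k > 0 \<Longrightarrow> g * d (p k) < 0 \<and>
      H (Suc k) = H k * (g * g) / (g * g - g * d (p k))" for k
  proof -
    assume Hk: "H k > 0"
    have ne: "p k \<noteq> x" using Hk gnz unfolding p_def by simp
    have "f x - f (p k) > d (p k) * (x - p k)" by (rule tangent_strict[OF conv D ne])
    hence "d (p k) * (H k * g) < 0" using ge'[of k] unfolding p_def by simp
    hence neg: "g * d (p k) < 0" using Hk
      by (smt (verit) mult.commute mult.left_commute mult_pos_pos zero_less_mult_iff)
    have sy: "(- H k * g) * (d (p k) - g) = H k * (g * g - g * d (p k))" by (simp add: algebra_simps)
    have pos: "H k * (g * g - g * d (p k)) > 0" using Hk neg g2 by simp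
    have sy0: "(- H k * g) * (d (x - H k * g) - g) \<noteq> 0" using pos sy unfolding p_def by (smt (verit))
    have "H (Suc k) = bfgs_update d x (H k)" unfolding H_def by simp
    also have "bfgs_update d x (H k) = (- H k * g) * (- H k * g) / ((- H k * g) * (d (p k) - g))"
      unfolding bfgs_update_def Let_def p_def g_def[symmetric] using sy0 by simp
    also have "\<dots> = (- H k * g) * (- H k * g) / (H k * (g * g - g * d (p k)))"
      by (simp only: sy)
    also have "\<dots> = H k * (g * g) / (g * g - g * d (p k))"
      using Hk by (rule aux_div)
    finally show ?thesis using neg by simp
  qed
  have Hpos: "H k > 0" for k
  proof (induction k)
    case 0 then show ?case using h_pos unfolding H_def by simp
  next
    case (Suc k)
    from step[OF Suc] have "g * d (p k) < 0" "H (Suc k) = H k * (g * g) / (g * g - g * d (p k))"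
      by auto
    then show ?case using Suc g2 by simp
  qed
  have neg: "g * d (p k) < 0" and rec: "H (Suc k) = H k * (g * g) / (g * g - g * d (p k))" for k
    using step[OF Hpos[of k]] by auto
  have eq: "H (Suc k) * (g * g - g * d (p k)) = H k * (g * g)" for k
  proof -
    have Q: "g * g - g * d (p k) \<noteq> 0" using neg[of k] g2 by linarith
    show ?thesis unfolding rec[of k] using Q by simp
  qed
  have dec: "decseq H"
  proof (rule decseq_SucI)
    fix k
    have "H k * (g * g) / (g * g - g * d (p k)) \<le> H k"
      using neg[of k] g2 Hpos[of k] by (simp add: divide_le_eq)
    then show "H (Suc k) \<le> H k" using rec by simp
  qed
  obtain L where L: "H \<longlonglongrightarrow> L" "\<forall>i. L \<le> H i"
    using decseq_convergent[OF dec, of 0] Hpos less_imp_le by blast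
  have L0: "L \<ge> 0" using L(1) Hpos by (meson LIMSEQ_le_const less_imp_le)
  define q where "q = x - L * g"
  have pq: "p \<longlonglongrightarrow> q" unfolding p_def q_def by (intro tendsto_intros L(1))
  have contd: "isCont d t" for t using C1 unfolding d_def by (simp add: continuous_on_eq_continuous_at)
  have contf: "isCont f t" for t using D DERIV_isCont by blast
  have dq: "(\<lambda>k. d (p k)) \<longlonglongrightarrow> d q" by (rule isCont_tendsto_compose[OF contd pq])
  have fq: "(\<lambda>k. f (p k)) \<longlonglongrightarrow> f q" by (rule isCont_tendsto_compose[OF contf pq])
  have "f q \<ge> f x" using fq ge' by (meson LIMSEQ_le_const)
  have gdq: "g * d q \<le> 0"
    using tendsto_mult[OF tendsto_const[of g] dq] neg
    by (meson LIMSEQ_le_const2 less_imp_le)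
  have Lpos: "L > 0"
  proof (rule ccontr)
    assume "\<not> L > 0"
    hence "L = 0" using L0 by simp
    hence "q = x" unfolding q_def by simp
    thus False using gdq g2 unfolding g_def by simp
  qed
  have lim1: "(\<lambda>k. H (Suc k) * (g * g - g * d (p k))) \<longlonglongrightarrow> L * (g * g - g * d q)"
    by (intro tendsto_intros dq) (rule LIMSEQ_Suc[OF L(1)])
  have lim2: "(\<lambda>k. H (Suc k) * (g * g - g * d (p k))) \<longlonglongrightarrow> L * (g * g)"
    unfolding eq by (intro tendsto_intros L(1))
  have "L * (g * g - g * d q) = L * (g * g)" using LIMSEQ_unique[OF lim1 lim2] .
  hence "d q = 0" using Lpos gnz by (simp add: algebra_simps)
  have "q \<noteq> x" unfolding q_def using Lpos gnz by simp
  hence "f x - f q > d q * (x - q)" by (rule tangent_strict[OF conv D])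
  with \<open>d q = 0\<close> \<open>f q \<ge> f x\<close> show False by simp
qed

end
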